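(* Let $q$ be a query, let $\pi_q$ be a finite ranked list of documents, and for each $d\in\pi_q$ let $\lambda(d|\pi_q)\in\mathbb{R}$ be a fixed weight, $r(d)\in\{0,1\}$ a fixed relevance judgment, and $k(d)$ the position of $d$ in the logged ranked list for $q$. Let $U$ be a finite set of users with a probability distribution $P(\cdot|q)$ on $U$, and for $u\in U$ write $p(d,u)=P(e(d)=1|k(d),u)$. Let $N_q$ be a finite nonempty collection of logged sessions for $q$, each session being a pair $(\vec c,u)$ with a fixed user $u\in U$; within each session the examinations $e(d)$, $d\in\pi_q$, are Bernoulli with $P(e(d)=1)=p(d,u)$, all examinations across documents and sessions are mutually independent, and clicks are $c(d)=e(d)\,r(d)$. Assume $p(d,u)>0$ for every $d$ with $r(d)=1$ and every user $u$ appearing in $N_q$. Define $$\hat{l}_{straight}(S|q,N_q)=\frac{1}{|N_q|}\sum_{(\vec c,u)\in N_q}\sum_{d\in\pi_q}\frac{\lambda(d|\pi_q)\,c(d)}{p(d,u)},\qquad \hat{l}_{user\text{-}aware}(S|q,N_q)=\frac{1}{|N_q|}\sum_{(\vec c,u)\in N_q}\sum_{d\in\pi_q}\frac{\lambda(d|\pi_q)\,c(d)}{\sum_{u'\in U}p(d,u')P(u'|q)}$$ (a summand with $c(d)=0$ being taken as $0$). Suppose that for all $d\in\pi_q$, $$\sum_{u\in U}p(d,u)P(u|q)\;\ge\;\frac{1}{|N_q|}\sum_{(\vec c,u)\in N_q}p(d,u).$$ Then $\mathbb{V}\big[\hat{l}_{user\text{-}aware}(S|q,N_q)\big]\le\mathbb{V}\big[\hat{l}_{straight}(S|q,N_q)\big]$,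 where the variances are over the examinations with the users of the sessions fixed.
   Context: Setting: unbiased learning to rank with a per-user position-based examination model and the examination hypothesis (a document is clicked iff it is examined and relevant). $S$ denotes the ranking model producing $\pi_q$; it enters only through the fixed weights $\lambda(d|\pi_q)$. The "straightforward" estimator uses each session's own user's examination probability as propensity; the "user-aware" estimator uses the $P(\cdot|q)$-weighted average examination probability. *)

theory Defs
  imports "HOL-Probability.Probability"
begin

text \<open>Documents of the ranked list rk (a distinct list of type 'd), sessions indexed
by a finite set N of session identifiers of type 's, each with a fixed user usr s.
The examination probability of document d for user u is
p d u = theta (kpos d) u = P(e(d)=1 | k(d), u).
An outcome of all examinations is a function e :: 'd \<times> 's \<Rightarrow> bool, e (d,s) being the
examination of d in session s.\<close>

definition exam_pmf ::
  "'d list \<Rightarrow> 's set \<Rightarrow> ('s \<Rightarrow> 'u) \<Rightarrow> ('d \<Rightarrow> 'u \<Rightarrow> real) \<Rightarrow> ('d \<times> 's \<Rightarrow> bool) pmf" where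
  "exam_pmf rk N usr p =
     Pi_pmf (set rk \<times> N) False (\<lambda>(d, s). bernoulli_pmf (p d (usr s)))"

definition click :: "('d \<Rightarrow> real) \<Rightarrow> ('d \<times> 's \<Rightarrow> bool) \<Rightarrow> 'd \<Rightarrow> 's \<Rightarrow> real" where
  "click r e d s = (if e (d, s) then 1 else 0) * r d"

definition ipw_term :: "real \<Rightarrow> real \<Rightarrow> real \<Rightarrow> real" where
  "ipw_term lam c prop = (if c = 0 then 0 else lam * c / prop)"

definition l_straight ::
  "'d list \<Rightarrow> 's set \<Rightarrow> ('s \<Rightarrow> 'u) \<Rightarrow> ('d \<Rightarrow> 'u \<Rightarrow> real) \<Rightarrow> ('d \<Rightarrow> real) \<Rightarrow> ('d \<Rightarrow> real)
     \<Rightarrow> ('d \<times> 's \<Rightarrow> bool) \<Rightarrow> real" where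
  "l_straight rk N usr p lam r e =
     (1 / real (card N)) * (\<Sum>s\<in>N. \<Sum>d\<in>set rk. ipw_term (lam d) (click r e d s) (p d (usr s)))"

definition l_user_aware ::
  "'d list \<Rightarrow> 's set \<Rightarrow> 'u set \<Rightarrow> ('u \<Rightarrow> real) \<Rightarrow> ('d \<Rightarrow> 'u \<Rightarrow> real) \<Rightarrow> ('d \<Rightarrow> real) \<Rightarrow> ('d \<Rightarrow> real)
     \<Rightarrow> ('d \<times> 's \<Rightarrow> bool) \<Rightarrow> real" where
  "l_user_aware rk N U Pu p lam r e =
     (1 / real (card N)) * (\<Sum>s\<in>N. \<Sum>d\<in>set rk.
        ipw_term (lam d) (click r e d s) (\<Sum>u'\<in>U. p d u' * Pu u'))"

end

theory Submission imports Defs begin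

lemma var_bern:
  fixes A :: "'i set" and a q :: "'i \<Rightarrow> real"
  assumes finA: "finite A" and q01: "\<forall>i\<in>A. 0 \<le> q i \<and> q i \<le> 1"
  shows "measure_pmf.variance (Pi_pmf A False (\<lambda>i. bernoulli_pmf (q i)))
           (\<lambda>e. \<Sum>i\<in>A. a i * (if e i then 1 else 0)) = (\<Sum>i\<in>A. a i ^ 2 * (q i * (1 - q i)))"
proof -
  define M where "M = Pi_pmf A False (\<lambda>i. bernoulli_pmf (q i))"
  have fin: "finite (set_pmf M)"
    unfolding M_def using finA by (subst set_Pi_pmf) (auto intro!: finite_PiE_dflt)
  have int: "\<And>f::_\<Rightarrow>real. integrable M f"
    by (rule integrable_measure_pmf_finite[OF fin])
  have Eij: "measure_pmf.expectation M (\<lambda>e. (if e i then 1 else 0) * (if e j then 1 else 0::real))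
      = (if i = j then q i else q i * q j)" if ij: "i \<in> A" "j \<in> A" for i j
  proof -
    define B where "B = (\<lambda>k. if k = i \<or> k = j then {True} else (UNIV::bool set))"
    have "(\<lambda>e. (if e i then 1 else 0) * (if e j then 1 else 0::real)) = indicator (Pi A B)"
      using ij by (auto simp: B_def indicator_def Pi_def fun_eq_iff)
    hence "measure_pmf.expectation M (\<lambda>e. (if e i then 1 else 0) * (if e j then 1 else 0::real))
        = measure_pmf.prob M (Pi A B)" by simp
    also have "\<dots> = (\<Prod>k\<in>A. measure_pmf.prob (bernoulli_pmf (q k)) (B k))"
      unfolding M_def by (rule measure_Pi_pmf_Pi[OF finA])
    also have "\<dots> = (\<Prod>k\<in>A. if k = i \<or> k = j then q k else 1)"
      using q01 by (intro prod.cong) (auto simp: B_def measure_pmf_single)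
    also have "\<dots> = (if i = j then q i else q i * q j)"
    proof (cases "i = j")
      case True
      then show ?thesis using ij finA by (simp add: prod.If_cases Int_absorb1 Int_def)
    next
      case False
      have "(\<Prod>k\<in>A. if k = i \<or> k = j then q k else 1) = (\<Prod>k\<in>{i,j}. q k)"
        using ij finA by (intro prod.mono_neutral_cong_right) auto
      then show ?thesis using False by simp
    qed
    finally show ?thesis .
  qed
  have Ei: "measure_pmf.expectation M (\<lambda>e. (if e i then 1 else 0::real)) = q i" if "i \<in> A" for i
    using Eij[OF that that] by (simp add: if_distrib cong: if_cong)
  let ?L = "\<lambda>e. \<Sum>i\<in>A. a i * (if e i then 1 else 0::real)"
  have EL: "measure_pmf.expectation M ?L = (\<Sum>i\<in>A. a i * q i)"
    by (subst Bochner_Integration.integral_sum) (auto intro: int simp: Ei)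
  have "(\<lambda>e. (?L e)\<^sup>2) = (\<lambda>e. \<Sum>i\<in>A. \<Sum>j\<in>A. a i * a j *
         ((if e i then 1 else 0) * (if e j then 1 else 0::real)))"
    by (auto simp: power2_eq_square sum_product fun_eq_iff intro!: sum.cong)
  hence EL2: "measure_pmf.expectation M (\<lambda>e. (?L e)\<^sup>2) =
       (\<Sum>i\<in>A. \<Sum>j\<in>A. a i * a j * (if i = j then q i else q i * q j))"
    by (simp add: Bochner_Integration.integral_sum int Eij)
  have "measure_pmf.variance M ?L = measure_pmf.expectation M (\<lambda>e. (?L e)\<^sup>2) - (measure_pmf.expectation M ?L)\<^sup>2"
    by (rule measure_pmf.variance_eq) (auto intro: int)
  also have "\<dots> = (\<Sum>i\<in>A. \<Sum>j\<in>A. a i * a j * (if i = j then q i else q i * q j) - a i * q i * (a j * q j))"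
    unfolding EL EL2 by (simp add: power2_eq_square sum_product sum_subtractf)
  also have "\<dots> = (\<Sum>i\<in>A. \<Sum>j\<in>A. if i = j then a i ^ 2 * (q i * (1 - q i)) else 0)"
    by (intro sum.cong refl) (auto simp: algebra_simps power2_eq_square)
  also have "\<dots> = (\<Sum>i\<in>A. a i ^ 2 * (q i * (1 - q i)))"
    using finA by (simp add: sum.delta)
  finally show ?thesis unfolding M_def .
qed

lemma key_ineq:
  fixes x :: "'s \<Rightarrow> real" and N :: "'s set" and Q :: real
  assumes finN: "finite N" and neN: "N \<noteq> {}"
    and x01: "\<forall>s\<in>N. 0 < x s \<and> x s \<le> 1"
    and QQ: "Q \<ge> (1 / real (card N)) * (\<Sum>s\<in>N. x s)"
  shows "(\<Sum>s\<in>N. x s * (1 - x s) / Q^2) \<le> (\<Sum>s\<in>N. (1 - x s) / x s)"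
proof -
  define n where "n = real (card N)"
  have npos: "n > 0" using finN neN by (simp add: n_def card_gt_0_iff)
  define m where "m = (\<Sum>s\<in>N. x s) / n"
  have sumx: "(\<Sum>s\<in>N. x s) = n * m" using npos by (simp add: m_def)
  obtain s0 where s0: "s0 \<in> N" using neN by blast
  have "x s0 \<le> (\<Sum>s\<in>N. x s)" using x01 s0 finN by (intro member_le_sum) auto
  hence mpos: "m > 0" using x01 s0 npos by (auto simp: m_def)
  have "(\<Sum>s\<in>N. x s) \<le> (\<Sum>s\<in>N. 1)" using x01 by (intro sum_mono) auto
  hence m1: "m \<le> 1" using npos by (simp add: m_def n_def)
  have mQ: "m \<le> Q" using QQ by (simp add: m_def n_def)
  hence Qpos: "Q > 0" using mpos by linarith
  define G where "G = (1 - m) * (Q^2 - m^2) / m"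
  define D where "D = - (Q^2 / m^2) - 1 + 2 * m"
  have G0: "G \<ge> 0" unfolding G_def using mpos m1 mQ
    by (intro divide_nonneg_pos mult_nonneg_nonneg) (auto intro: power_mono)
  have each: "(1 - x s) / x s - x s * (1 - x s) / Q^2 \<ge> (G + D * (x s - m)) / Q^2" if "s \<in> N" for s
  proof -
    have xs: "x s > 0" using x01 that by auto
    have "(1 - x s) / x s - x s * (1 - x s) / Q^2 - (G + D * (x s - m)) / Q^2
        = (x s - m)^2 / (x s * m^2) + (x s - m)^2 / Q^2"
      unfolding G_def D_def using xs mpos Qpos
      by (simp add: field_simps power2_eq_square)
    also have "\<dots> \<ge> 0" using xs mpos Qpos by (intro add_nonneg_nonneg divide_nonneg_pos) auto
    finally show ?thesis by linarith
  qed
  have "(\<Sum>s\<in>N. (G + D * (x s - m)) / Q^2) = (n * G + D * ((\<Sum>s\<in>N. x s) - n * m)) / Q^2"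
    by (simp add: sum_divide_distrib[symmetric] sum.distrib sum_distrib_left[symmetric]
          sum_subtractf n_def algebra_simps)
  also have "\<dots> \<ge> 0" using sumx G0 npos by simp
  finally have "0 \<le> (\<Sum>s\<in>N. (1 - x s) / x s - x s * (1 - x s) / Q^2)"
    using sum_mono[of N "\<lambda>s. (G + D * (x s - m)) / Q^2", OF each] by linarith
  thus ?thesis by (simp add: sum_subtractf)
qed

theorem theorem3p3:
  fixes rk :: "'d list" and kpos :: "'d \<Rightarrow> nat" and theta :: "nat \<Rightarrow> 'u \<Rightarrow> real"
    and lam :: "'d \<Rightarrow> real" and r :: "'d \<Rightarrow> real"
    and U :: "'u set" and Pu :: "'u \<Rightarrow> real"
    and N :: "'s set" and usr :: "'s \<Rightarrow> 'u"
  defines "p \<equiv> (\<lambda>d u. theta (kpos d) u)"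
  assumes distinct_pi: "distinct rk"
    and r01: "\<forall>d\<in>set rk. r d \<in> {0, 1}"
    and finU: "finite U"
    and Pu_nonneg: "\<forall>u\<in>U. Pu u \<ge> 0"
    and Pu_sum: "(\<Sum>u\<in>U. Pu u) = 1"
    and p_prob: "\<forall>d\<in>set rk. \<forall>u\<in>U. 0 \<le> p d u \<and> p d u \<le> 1"
    and finN: "finite N" and neN: "N \<noteq> {}"
    and usrU: "\<forall>s\<in>N. usr s \<in> U"
    and p_pos: "\<forall>d\<in>set rk. \<forall>s\<in>N. r d = 1 \<longrightarrow> p d (usr s) > 0"
    and cond: "\<forall>d\<in>set rk. (\<Sum>u\<in>U. p d u * Pu u) \<ge> (1 / real (card N)) * (\<Sum>s\<in>N. p d (usr s))"
  shows "measure_pmf.variance (exam_pmf rk N usr p) (l_user_aware rk N U Pu p lam r)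
           \<le> measure_pmf.variance (exam_pmf rk N usr p) (l_straight rk N usr p lam r)"
proof -
  define I where "I = set rk \<times> N"
  define q where "q = (\<lambda>(d, s). p d (usr s))"
  define n where "n = real (card N)"
  define Q where "Q = (\<lambda>d. \<Sum>u\<in>U. p d u * Pu u)"
  define aS where "aS = (\<lambda>(d, s). (1 / n) * (if r d = 1 then lam d / p d (usr s) else 0))"
  define aU where "aU = (\<lambda>(d, s::'s). (1 / n) * (if r d = 1 then lam d / Q d else 0))"
  have finI: "finite I" using finN by (simp add: I_def)
  have q01: "\<forall>i\<in>I. 0 \<le> q i \<and> q i \<le> 1" using p_prob usrU by (auto simp: I_def q_def)
  have M: "exam_pmf rk N usr p = Pi_pmf I False (\<lambda>i. bernoulli_pmf (q i))"
    unfolding exam_pmf_def I_def q_def by (intro Pi_pmf_cong) auto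
  have ipw: "ipw_term (lam d) (click r e d s) P = (if e (d, s) then 1 else 0) * (if r d = 1 then lam d / P else 0)"
    if "d \<in> set rk" for d s e P
    using r01 that by (auto simp: ipw_term_def click_def)
  have LS: "l_straight rk N usr p lam r = (\<lambda>e. \<Sum>i\<in>I. aS i * (if e i then 1 else 0))"
  proof
    fix e
    have "l_straight rk N usr p lam r e = (1 / n) * (\<Sum>s\<in>N. \<Sum>d\<in>set rk. ipw_term (lam d) (click r e d s) (p d (usr s)))"
      unfolding l_straight_def n_def by simp
    also have "\<dots> = (1 / n) * (\<Sum>d\<in>set rk. \<Sum>s\<in>N. ipw_term (lam d) (click r e d s) (p d (usr s)))"
      by (subst sum.swap) simp
    also have "\<dots> = (1 / n) * (\<Sum>(d, s)\<in>I. ipw_term (lam d) (click r e d s) (p d (usr s)))"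
      unfolding I_def by (simp add: sum.cartesian_product)
    also have "\<dots> = (\<Sum>i\<in>I. aS i * (if e i then 1 else 0))"
      unfolding sum_distrib_left
      by (intro sum.cong refl) (auto simp: I_def aS_def Q_def ipw)
    finally show "l_straight rk N usr p lam r e = (\<Sum>i\<in>I. aS i * (if e i then 1 else 0))" .
  qed
  have LU: "l_user_aware rk N U Pu p lam r = (\<lambda>e. \<Sum>i\<in>I. aU i * (if e i then 1 else 0))"
  proof
    fix e
    have "l_user_aware rk N U Pu p lam r e = (1 / n) * (\<Sum>s\<in>N. \<Sum>d\<in>set rk. ipw_term (lam d) (click r e d s) (\<Sum>u'\<in>U. p d u' * Pu u'))"
      unfolding l_user_aware_def n_def by simp
    also have "\<dots> = (1 / n) * (\<Sum>d\<in>set rk. \<Sum>s\<in>N. ipw_term (lam d) (click r e d s) (\<Sum>u'\<in>U. p d u' * Pu u'))"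
      by (subst sum.swap) simp
    also have "\<dots> = (1 / n) * (\<Sum>(d, s)\<in>I. ipw_term (lam d) (click r e d s) (\<Sum>u'\<in>U. p d u' * Pu u'))"
      unfolding I_def by (simp add: sum.cartesian_product)
    also have "\<dots> = (\<Sum>i\<in>I. aU i * (if e i then 1 else 0))"
      unfolding sum_distrib_left
      by (intro sum.cong refl) (auto simp: I_def aU_def Q_def ipw)
    finally show "l_user_aware rk N U Pu p lam r e = (\<Sum>i\<in>I. aU i * (if e i then 1 else 0))" .
  qed
  have per_d: "(\<Sum>s\<in>N. aU (d, s) ^ 2 * (q (d, s) * (1 - q (d, s))))
      \<le> (\<Sum>s\<in>N. aS (d, s) ^ 2 * (q (d, s) * (1 - q (d, s))))" if d: "d \<in> set rk" for d
  proof (cases "r d = 1")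
    case False
    then show ?thesis by (simp add: aU_def aS_def)
  next
    case True
    have x01: "\<forall>s\<in>N. 0 < p d (usr s) \<and> p d (usr s) \<le> 1"
      using p_pos p_prob usrU d True by auto
    have ki: "(\<Sum>s\<in>N. p d (usr s) * (1 - p d (usr s)) / (Q d)^2) \<le> (\<Sum>s\<in>N. (1 - p d (usr s)) / p d (usr s))"
      by (rule key_ineq[OF finN neN x01]) (use cond d in \<open>simp add: Q_def\<close>)
    have c0: "(lam d / n)^2 \<ge> 0" by simp
    have "(\<Sum>s\<in>N. aU (d, s) ^ 2 * (q (d, s) * (1 - q (d, s))))
        = (lam d / n)^2 * (\<Sum>s\<in>N. p d (usr s) * (1 - p d (usr s)) / (Q d)^2)"
      using True by (simp add: aU_def q_def sum_distrib_left power_divide field_simps)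
    also have "\<dots> \<le> (lam d / n)^2 * (\<Sum>s\<in>N. (1 - p d (usr s)) / p d (usr s))"
      by (rule mult_left_mono[OF ki c0])
    also have "\<dots> = (\<Sum>s\<in>N. aS (d, s) ^ 2 * (q (d, s) * (1 - q (d, s))))"
    proof -
      have np: "n > 0" using finN neN by (simp add: n_def card_gt_0_iff)
      show ?thesis using True x01 np
        by (auto simp: aS_def q_def sum_distrib_left power_divide field_simps power2_eq_square intro!: sum.cong)
    qed
    finally show ?thesis .
  qed
  have "(\<Sum>i\<in>I. aU i ^ 2 * (q i * (1 - q i))) \<le> (\<Sum>i\<in>I. aS i ^ 2 * (q i * (1 - q i)))"
    unfolding I_def sum.cartesian_product' by (intro sum_mono per_d)
  thus ?thesis unfolding M LS LU var_bern[OF finI q01] .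
qed

end
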